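(* Let $\beta_Q'\ge2$ and set $\delta^{(a)}=\beta_Q'\bar\sigma_a^2\frac{\log K}{K}$. Let $\{\mathbf Q_u(t),t\ge0\}$ be a Brownian motion with drift $-\delta^{(a)}$ and variance parameter $\bar\sigma_a^2$, reflected at $K/2$ (taking values in $[K/2,\infty)$, with no upper boundary), and define $p^{\mathcal Q}_{\text{overflow}}(K)=\frac12\lim_{t\to\infty}\mathbb P(\mathbf Q_u(t)>K)$. Then $p^{\mathcal Q}_{\text{overflow}}(K)=O(K^{-\beta_Q'})$ as $K\to\infty$.
   Context: This arises from the energy management scheme $\mathcal Q$ for a node with data buffer of size $K$, arrivals of mean $\lambda$ and asymptotic variance $\bar\sigma_a^2=\lim_{\tau\to\infty}\frac1\tau\mathrm{Var}(\sum_{t=1}^\tau a(t))$, under which the queue always drifts toward level $K/2$ at rate $\delta^{(a)}$ (service rate $\lambda+\delta^{(a)}$ when $Q(t)\ge K/2$ and $\lambda-\delta^{(a)}$ when $Q(t)<K/2$). In the diffusion (heavy-traffic) approximation $\mathbf Q(t)$ of the queue, with the upper boundary removed, $\mathbf Q_u(t)=|\mathbf Q(t)-K/2|+K/2$ is the reflected Brownian motion described in the claim. *)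

theory Defs
  imports "HOL-Probability.Probability" "HOL-Library.Landau_Symbols"
begin

definition std_brownian_motion :: "'a measure \<Rightarrow> (real \<Rightarrow> 'a \<Rightarrow> real) \<Rightarrow> bool" where
  "std_brownian_motion M W \<longleftrightarrow>
     prob_space M \<and>
     (\<forall>t\<ge>0. W t \<in> borel_measurable M) \<and>
     (\<forall>\<omega>\<in>space M. W 0 \<omega> = 0 \<and> continuous_on {0..} (\<lambda>t. W t \<omega>)) \<and>
     (\<forall>s t. 0 \<le> s \<longrightarrow> s < t \<longrightarrow>
        distributed M lborel (\<lambda>\<omega>. W t \<omega> - W s \<omega>) (normal_density 0 (sqrt (t - s)))) \<and>
     (\<forall>ts::real list. sorted_wrt (<) ts \<longrightarrow> (\<forall>t\<in>set ts. 0 \<le> t) \<longrightarrow>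
        prob_space.indep_vars M (\<lambda>_. borel)
          (\<lambda>i \<omega>. W (ts ! Suc i) \<omega> - W (ts ! i) \<omega>) {..<length ts - 1})"

definition drifted_bm :: "(real \<Rightarrow> 'a \<Rightarrow> real) \<Rightarrow> real \<Rightarrow> real \<Rightarrow> real \<Rightarrow> 'a \<Rightarrow> real" where
  "drifted_bm W mu s2 t \<omega> = sqrt s2 * W t \<omega> + mu * t"

text \<open>Reflection at level b via the Skorokhod map, process started at b.\<close>
definition reflected_bm :: "(real \<Rightarrow> 'a \<Rightarrow> real) \<Rightarrow> real \<Rightarrow> real \<Rightarrow> real \<Rightarrow> real \<Rightarrow> 'a \<Rightarrow> real" where
  "reflected_bm W mu s2 b t \<omega> =
     b + drifted_bm W mu s2 t \<omega> - min 0 (Inf ((\<lambda>s. drifted_bm W mu s2 s \<omega>) ` {0..t}))"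

definition delta_a :: "real \<Rightarrow> real \<Rightarrow> nat \<Rightarrow> real" where
  "delta_a beta s2 K = beta * s2 * ln (real K) / real K"

definition p_overflow :: "'a measure \<Rightarrow> (real \<Rightarrow> 'a \<Rightarrow> real) \<Rightarrow> real \<Rightarrow> real \<Rightarrow> nat \<Rightarrow> real" where
  "p_overflow M W s2 beta K =
     1/2 * Lim at_top (\<lambda>t. measure M
        {\<omega> \<in> space M. reflected_bm W (- delta_a beta s2 K) s2 (real K / 2) t \<omega> > real K})"

end

theory Submission
  imports Defs
begin

lemma sum_upd_shift:
  fixes g :: "real \<Rightarrow> real" and m k :: nat
  shows "(\<Sum>j\<in>{m..<m+Suc k}. g ((x(m:=y)) j)) = g y + (\<Sum>j\<in>{Suc m..<Suc m+k}. g (x j))"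
proof -
  have "(\<Sum>j\<in>{m..<m+Suc k}. g ((x(m:=y)) j)) = g ((x(m:=y)) m) + (\<Sum>j\<in>{Suc m..<m+Suc k}. g ((x(m:=y)) j))"
    by (rule sum.atLeast_Suc_lessThan) simp
  also have "(\<Sum>j\<in>{Suc m..<m+Suc k}. g ((x(m:=y)) j)) = (\<Sum>j\<in>{Suc m..<Suc m+k}. g (x j))"
    by (rule sum.cong) auto
  finally show ?thesis by simp
qed

lemma doob_sets:
  fixes \<nu> :: "real measure" and g :: "real \<Rightarrow> real" and n0 N :: nat
  assumes g: "g \<in> borel_measurable \<nu>"
  shows "{x \<in> space (PiM {n0..<n0+N} (\<lambda>_. \<nu>)). \<exists>k\<in>{..N}. (\<Sum>j\<in>{n0..<n0+k}. g (x j)) > c}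
     \<in> sets (PiM {n0..<n0+N} (\<lambda>_. \<nu>))"
proof -
  have eq: "{x \<in> space (PiM {n0..<n0+N} (\<lambda>_. \<nu>)). \<exists>k\<in>{..N}. (\<Sum>j\<in>{n0..<n0+k}. g (x j)) > c}
     = (\<Union>k\<in>{..N}. {x \<in> space (PiM {n0..<n0+N} (\<lambda>_. \<nu>)). c < (\<Sum>j\<in>{n0..<n0+k}. g (x j))})"
    by auto
  have m: "(\<lambda>x. \<Sum>j\<in>{n0..<n0+k}. g (x j)) \<in> borel_measurable (PiM {n0..<n0+N} (\<lambda>_. \<nu>))"
    if "k \<le> N" for k
  proof (rule borel_measurable_sum)
    fix j assume "j \<in> {n0..<n0+k}"
    then have j: "j \<in> {n0..<n0+N}" using that by auto
    show "(\<lambda>x. g (x j)) \<in> borel_measurable (PiM {n0..<n0+N} (\<lambda>_. \<nu>))"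
      by (rule measurable_compose[OF measurable_component_singleton[OF j, of "\<lambda>_. \<nu>"] g])
  qed
  show ?thesis unfolding eq
    using m by (intro sets.finite_UN) auto
qed

lemma doob_prod:
  fixes \<nu> :: "real measure" and g :: "real \<Rightarrow> real" and \<theta> :: real and N n0 :: nat
  assumes P: "prob_space \<nu>" and g: "g \<in> borel_measurable \<nu>" and th: "\<theta> \<ge> 0"
    and mgf: "(\<integral>\<^sup>+y. ennreal (exp (\<theta> * g y)) \<partial>\<nu>) \<le> 1"
  shows "emeasure (PiM {n0..<n0+N} (\<lambda>_. \<nu>))
     {x \<in> space (PiM {n0..<n0+N} (\<lambda>_. \<nu>)). \<exists>k\<in>{..N}. (\<Sum>j\<in>{n0..<n0+k}. g (x j)) > c}
     \<le> ennreal (exp (- \<theta> * c))"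
proof (induction N arbitrary: n0 c)
  case 0
  interpret PP: prob_space "PiM {n0..<n0+0} (\<lambda>_. \<nu>)" by (intro prob_space_PiM P)
  show ?case
  proof (cases "c < 0")
    case True
    have "1 \<le> exp (- \<theta> * c)" using mult_nonneg_nonpos[OF th, of c] True by simp
    show ?thesis by (rule order_trans[OF PP.emeasure_le_1]) (use \<open>1 \<le> exp _\<close> in simp)
  next
    case False
    then show ?thesis by simp
  qed
next
  case (Suc N)
  let ?S = "\<lambda>n0 N c. {x \<in> space (PiM {n0..<n0+N} (\<lambda>_. \<nu>)). \<exists>k\<in>{..N}. (\<Sum>j\<in>{n0..<n0+k}. g (x j)) > c}"
  interpret PP: prob_space "PiM {n0..<n0+Suc N} (\<lambda>_. \<nu>)" by (intro prob_space_PiM P)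
  interpret PS: product_sigma_finite "\<lambda>_. \<nu>"
    by (simp add: product_sigma_finite_def P prob_space_imp_sigma_finite)
  show ?case
  proof (cases "c < 0")
    case True
    have "1 \<le> exp (- \<theta> * c)" using mult_nonneg_nonpos[OF th, of c] True by simp
    show ?thesis by (rule order_trans[OF PP.emeasure_le_1]) (use \<open>1 \<le> exp _\<close> in simp)
  next
    case False
    have I: "{n0..<n0+Suc N} = insert n0 {Suc n0..<Suc n0+N}" by auto
    have "emeasure (PiM {n0..<n0+Suc N} (\<lambda>_. \<nu>)) (?S n0 (Suc N) c)
        = (\<integral>\<^sup>+x. indicator (?S n0 (Suc N) c) x \<partial>PiM {n0..<n0+Suc N} (\<lambda>_. \<nu>))"
      by (rule nn_integral_indicator[symmetric]) (rule doob_sets[OF g])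
    also have "\<dots> = (\<integral>\<^sup>+y. (\<integral>\<^sup>+x. indicator (?S n0 (Suc N) c) (x(n0:=y)) \<partial>PiM {Suc n0..<Suc n0+N} (\<lambda>_. \<nu>)) \<partial>\<nu>)"
    proof -
      have mS: "?S n0 (Suc N) c \<in> sets (PiM {n0..<n0+Suc N} (\<lambda>_. \<nu>))" by (rule doob_sets[OF g])
      show ?thesis
        by (rule PS.product_nn_integral_insert_rev[of "{Suc n0..<Suc n0+N}" n0, unfolded I[symmetric]])
          (rule finite_atLeastLessThan, simp, rule borel_measurable_indicator[OF mS])
    qed
    also have "\<dots> \<le> (\<integral>\<^sup>+y. ennreal (exp (- \<theta> * c)) * ennreal (exp (\<theta> * g y)) \<partial>\<nu>)"
    proof (rule nn_integral_mono)
      fix y assume y: "y \<in> space \<nu>"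
      have "(\<integral>\<^sup>+x. indicator (?S n0 (Suc N) c) (x(n0:=y)) \<partial>PiM {Suc n0..<Suc n0+N} (\<lambda>_. \<nu>))
          = (\<integral>\<^sup>+x. indicator (?S (Suc n0) N (c - g y)) x \<partial>PiM {Suc n0..<Suc n0+N} (\<lambda>_. \<nu>))"
      proof (rule nn_integral_cong)
        fix x assume x: "x \<in> space (PiM {Suc n0..<Suc n0+N} (\<lambda>_. \<nu>))"
        have xs: "x(n0:=y) \<in> space (PiM {n0..<n0+Suc N} (\<lambda>_. \<nu>))"
          using x y unfolding I space_PiM by (intro PiE_fun_upd) simp_all
        have "(\<exists>k\<in>{..Suc N}. (\<Sum>j\<in>{n0..<n0+k}. g ((x(n0:=y)) j)) > c) \<longleftrightarrow>
              (\<exists>k\<in>{..N}. (\<Sum>j\<in>{Suc n0..<Suc n0+k}. g (x j)) > c - g y)"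
        proof
          assume "\<exists>k\<in>{..Suc N}. (\<Sum>j\<in>{n0..<n0+k}. g ((x(n0:=y)) j)) > c"
          then obtain k where k: "k \<le> Suc N" "(\<Sum>j\<in>{n0..<n0+k}. g ((x(n0:=y)) j)) > c" by auto
          then obtain k' where kk: "k = Suc k'" using False by (cases k) auto
          show "\<exists>k\<in>{..N}. (\<Sum>j\<in>{Suc n0..<Suc n0+k}. g (x j)) > c - g y"
            using k unfolding kk sum_upd_shift by (intro bexI[of _ k']) auto
        next
          assume "\<exists>k\<in>{..N}. (\<Sum>j\<in>{Suc n0..<Suc n0+k}. g (x j)) > c - g y"
          then obtain k where k: "k \<le> N" "(\<Sum>j\<in>{Suc n0..<Suc n0+k}. g (x j)) > c - g y" by auto
          show "\<exists>k\<in>{..Suc N}. (\<Sum>j\<in>{n0..<n0+k}. g ((x(n0:=y)) j)) > c"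
          proof (rule bexI[of _ "Suc k"])
            show "(\<Sum>j\<in>{n0..<n0+Suc k}. g ((x(n0:=y)) j)) > c"
              using k(2) sum_upd_shift[where g=g and m=n0 and k=k and x=x and y=y] by linarith
          qed (use k(1) in simp)
        qed
        then show "indicator (?S n0 (Suc N) c) (x(n0:=y)) = indicator (?S (Suc n0) N (c - g y)) x"
          unfolding indicator_def using x xs by simp
      qed
      also have "\<dots> = emeasure (PiM {Suc n0..<Suc n0+N} (\<lambda>_. \<nu>)) (?S (Suc n0) N (c - g y))"
        by (rule nn_integral_indicator) (rule doob_sets[OF g])
      also have "\<dots> \<le> ennreal (exp (- \<theta> * (c - g y)))" by (rule Suc.IH)
      also have "\<dots> = ennreal (exp (- \<theta> * c)) * ennreal (exp (\<theta> * g y))"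
      proof -
        have "exp (- \<theta> * (c - g y)) = exp (- \<theta> * c) * exp (\<theta> * g y)"
          by (simp add: exp_add[symmetric] algebra_simps)
        then show ?thesis by (simp add: ennreal_mult)
      qed
      finally show "(\<integral>\<^sup>+x. indicator (?S n0 (Suc N) c) (x(n0:=y)) \<partial>PiM {Suc n0..<Suc n0+N} (\<lambda>_. \<nu>))
          \<le> ennreal (exp (- \<theta> * c)) * ennreal (exp (\<theta> * g y))" .
    qed
    also have "\<dots> = ennreal (exp (- \<theta> * c)) * (\<integral>\<^sup>+y. ennreal (exp (\<theta> * g y)) \<partial>\<nu>)"
      by (rule nn_integral_cmult) (use g in measurable)
    also have "\<dots> \<le> ennreal (exp (- \<theta> * c)) * 1"
      by (rule mult_left_mono[OF mgf]) simp
    finally show ?thesis by simp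
  qed
qed

lemma mgf_normal:
  fixes h s2 mu \<theta> :: real
  assumes h: "h > 0" and s2: "s2 > 0" and th: "\<theta> = -2*mu/s2"
  shows "(\<integral>\<^sup>+y. ennreal (exp (\<theta> * (sqrt s2 * y + mu * h))) \<partial>density lborel (\<lambda>x. ennreal (normal_density 0 (sqrt h) x))) = 1"
proof -
  define m where "m = \<theta> * sqrt s2 * h"
  have pt: "normal_density 0 (sqrt h) y * exp (\<theta> * (sqrt s2 * y + mu * h)) = normal_density m (sqrt h) y" for y
  proof -
    have "normal_density 0 (sqrt h) y * exp (\<theta> * (sqrt s2 * y + mu * h))
        = 1 / sqrt (2 * pi * h) * exp (-(y - 0)\<^sup>2/ (2 * h) + \<theta> * (sqrt s2 * y + mu * h))"
      using h by (simp only: exp_add) (simp add: normal_density_def)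
    also have "-(y - 0)\<^sup>2/ (2 * h) + \<theta> * (sqrt s2 * y + mu * h) = -(y - m)\<^sup>2/ (2 * h)"
    proof -
      have ss: "sqrt s2 * sqrt s2 = s2" using s2 by simp
      have "mu = - \<theta> * s2 / 2" using th s2 by simp
      then show ?thesis using h s2 unfolding m_def
        by (simp add: field_simps power2_eq_square ss)
    qed
    finally show ?thesis using h by (simp add: normal_density_def)
  qed
  have "(\<integral>\<^sup>+y. ennreal (exp (\<theta> * (sqrt s2 * y + mu * h))) \<partial>density lborel (\<lambda>x. ennreal (normal_density 0 (sqrt h) x)))
      = (\<integral>\<^sup>+y. ennreal (normal_density 0 (sqrt h) y) * ennreal (exp (\<theta> * (sqrt s2 * y + mu * h))) \<partial>lborel)"
    by (rule nn_integral_density) measurable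
  also have "\<dots> = (\<integral>\<^sup>+y. ennreal (normal_density m (sqrt h) y) \<partial>lborel)"
    by (rule nn_integral_cong) (simp add: pt[symmetric] ennreal_mult)
  also have "\<dots> = 1"
  proof -
    interpret prob_space "density lborel (\<lambda>x. ennreal (normal_density m (sqrt h) x))"
      by (rule prob_space_normal_density) (simp add: h)
    have "emeasure (density lborel (\<lambda>x. ennreal (normal_density m (sqrt h) x))) UNIV = 1"
      using emeasure_space_1 by simp
    then show ?thesis by (simp add: emeasure_density)
  qed
  finally show ?thesis .
qed

lemma sum_rev_part:
  fixes f :: "nat \<Rightarrow> real" and N k :: nat
  assumes "k \<le> N"
  shows "(\<Sum>j<k. f (N - Suc j)) = (\<Sum>j\<in>{N-k..<N}. f j)"
  by (rule sum.reindex_bij_witness[where i="\<lambda>j. N - Suc j" and j="\<lambda>j. N - Suc j"]) (use assms in auto)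

lemma rev_prod:
  fixes \<nu> :: "real measure" and g :: "real \<Rightarrow> real" and N :: nat and a :: real
  assumes P: "prob_space \<nu>" and g: "g \<in> borel_measurable \<nu>"
  shows "measure (PiM {..<N} (\<lambda>_. \<nu>)) {x\<in>space (PiM {..<N} (\<lambda>_. \<nu>)). \<exists>k\<in>{..N}. (\<Sum>j\<in>{k..<N}. g (x j)) > a}
       = measure (PiM {..<N} (\<lambda>_. \<nu>)) {x\<in>space (PiM {..<N} (\<lambda>_. \<nu>)). \<exists>k\<in>{..N}. (\<Sum>j<k. g (x j)) > a}"
proof -
  let ?P = "PiM {..<N} (\<lambda>_. \<nu>)"
  let ?A = "{x\<in>space ?P. \<exists>k\<in>{..N}. (\<Sum>j\<in>{k..<N}. g (x j)) > a}"
  let ?B = "{x\<in>space ?P. \<exists>k\<in>{..N}. (\<Sum>j<k. g (x j)) > a}"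
  define t where "t = (\<lambda>\<omega>::nat\<Rightarrow>real. \<lambda>n\<in>{..<N}. \<omega> (N - Suc n))"
  have d: "distr ?P ?P t = ?P"
  proof -
    have inj: "inj_on (\<lambda>n. N - Suc n) {..<N}" by (rule inj_onI) auto
    show ?thesis unfolding t_def
      by (rule distr_PiM_reindex[OF _ inj]) (use P in auto)
  qed
  have tm: "t \<in> measurable ?P ?P"
    unfolding t_def by (intro measurable_restrict measurable_component_singleton) auto
  have mB: "(\<lambda>x. \<Sum>j<k. g (x j)) \<in> borel_measurable ?P" if "k \<le> N" for k
  proof (rule borel_measurable_sum)
    fix j assume "j \<in> {..<k}"
    then have j: "j \<in> {..<N}" using that by auto
    show "(\<lambda>x. g (x j)) \<in> borel_measurable ?P"
      by (rule measurable_compose[OF measurable_component_singleton[OF j, of "\<lambda>_. \<nu>"] g])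
  qed
  have Bs: "?B \<in> sets ?P"
  proof -
    have "?B = (\<Union>k\<in>{..N}. {x\<in>space ?P. a < (\<Sum>j<k. g (x j))})" by auto
    also have "\<dots> \<in> sets ?P" using mB by (intro sets.finite_UN) auto
    finally show ?thesis .
  qed
  have pre: "t -` ?B \<inter> space ?P = ?A"
  proof (intro set_eqI iffI)
    fix x assume "x \<in> t -` ?B \<inter> space ?P"
    then have x: "x \<in> space ?P" and "\<exists>k\<in>{..N}. (\<Sum>j<k. g (t x j)) > a" by auto
    then obtain k where k: "k \<le> N" "(\<Sum>j<k. g (t x j)) > a" by auto
    have "(\<Sum>j<k. g (t x j)) = (\<Sum>j<k. g (x (N - Suc j)))"
      using k(1) unfolding t_def by (intro sum.cong) auto
    also have "\<dots> = (\<Sum>j\<in>{N-k..<N}. g (x j))" by (rule sum_rev_part[OF k(1)])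
    finally show "x \<in> ?A" using x k by (intro CollectI conjI bexI[of _ "N-k"]) auto
  next
    fix x assume "x \<in> ?A"
    then have x: "x \<in> space ?P" and "\<exists>k\<in>{..N}. (\<Sum>j\<in>{k..<N}. g (x j)) > a" by auto
    then obtain k where k: "k \<le> N" "(\<Sum>j\<in>{k..<N}. g (x j)) > a" by auto
    have kk: "N - (N - k) = k" using k by simp
    have "(\<Sum>j<N-k. g (t x j)) = (\<Sum>j<N-k. g (x (N - Suc j)))"
      unfolding t_def by (intro sum.cong) auto
    also have "\<dots> = (\<Sum>j\<in>{k..<N}. g (x j))" using sum_rev_part[of "N-k" N "\<lambda>j. g (x j)"] kk by simp
    finally have "(\<Sum>j<N-k. g (t x j)) > a" using k by simp
    moreover have "t x \<in> space ?P" using measurable_space[OF tm x] .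
    ultimately show "x \<in> t -` ?B \<inter> space ?P" using x by auto
  qed
  have "measure ?P ?B = measure (distr ?P ?P t) ?B" using d by simp
  also have "\<dots> = measure ?P (t -` ?B \<inter> space ?P)" by (rule measure_distr[OF tm Bs])
  finally show ?thesis unfolding pre by simp
qed

lemma sets_AB:
  fixes \<nu> :: "real measure" and g :: "real \<Rightarrow> real" and N :: nat and a :: real
  assumes g: "g \<in> borel_measurable \<nu>"
  shows "{x\<in>space (PiM {..<N} (\<lambda>_. \<nu>)). \<exists>k\<in>{..N}. (\<Sum>j\<in>{k..<N}. g (x j)) > a} \<in> sets (PiM {..<N} (\<lambda>_. \<nu>))"
    and "{x\<in>space (PiM {..<N} (\<lambda>_. \<nu>)). \<exists>k\<in>{..N}. (\<Sum>j<k. g (x j)) > a} \<in> sets (PiM {..<N} (\<lambda>_. \<nu>))"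
proof -
  let ?P = "PiM {..<N} (\<lambda>_. \<nu>)"
  have c: "(\<lambda>x. g (x j)) \<in> borel_measurable ?P" if "j < N" for j
    using that by (intro measurable_compose[OF measurable_component_singleton[of j "{..<N}" "\<lambda>_. \<nu>"] g]) simp
  have mA: "(\<lambda>x. \<Sum>j\<in>{k..<N}. g (x j)) \<in> borel_measurable ?P" for k
    by (rule borel_measurable_sum) (use c in auto)
  have mB: "(\<lambda>x. \<Sum>j<k. g (x j)) \<in> borel_measurable ?P" if "k \<le> N" for k
    by (rule borel_measurable_sum) (use c that in auto)
  have "{x\<in>space ?P. \<exists>k\<in>{..N}. (\<Sum>j\<in>{k..<N}. g (x j)) > a} = (\<Union>k\<in>{..N}. {x\<in>space ?P. a < (\<Sum>j\<in>{k..<N}. g (x j))})" by auto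
  also have "\<dots> \<in> sets ?P" using mA by (intro sets.finite_UN) auto
  finally show "{x\<in>space ?P. \<exists>k\<in>{..N}. (\<Sum>j\<in>{k..<N}. g (x j)) > a} \<in> sets ?P" .
  have "{x\<in>space ?P. \<exists>k\<in>{..N}. (\<Sum>j<k. g (x j)) > a} = (\<Union>k\<in>{..N}. {x\<in>space ?P. a < (\<Sum>j<k. g (x j))})" by auto
  also have "\<dots> \<in> sets ?P" using mB by (intro sets.finite_UN) auto
  finally show "{x\<in>space ?P. \<exists>k\<in>{..N}. (\<Sum>j<k. g (x j)) > a} \<in> sets ?P" .
qed

lemma grid_lemma:
  fixes M :: "'a measure" and W :: "real \<Rightarrow> 'a \<Rightarrow> real" and s2 mu a t \<theta> :: real and N :: nat
  assumes BM: "std_brownian_motion M W" and s2: "s2 > 0" and t: "t > 0" and N: "N > 0"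
    and th: "\<theta> = -2*mu/s2" and mu: "mu \<le> 0"
  shows "measure M {\<omega>\<in>space M. \<exists>k\<in>{..N}. drifted_bm W mu s2 t \<omega> - drifted_bm W mu s2 (real k * (t / real N)) \<omega> > a}
       = measure M {\<omega>\<in>space M. \<exists>k\<in>{..N}. drifted_bm W mu s2 (real k * (t / real N)) \<omega> > a}
   \<and> measure M {\<omega>\<in>space M. \<exists>k\<in>{..N}. drifted_bm W mu s2 (real k * (t / real N)) \<omega> > a} \<le> exp (- \<theta> * a)"
proof -
  have PM: "prob_space M" using BM unfolding std_brownian_motion_def by blast
  interpret prob_space M by (rule PM)
  have Wm: "\<And>s. s \<ge> 0 \<Longrightarrow> W s \<in> borel_measurable M" using BM unfolding std_brownian_motion_def by blast
  have W0: "\<And>\<omega>. \<omega> \<in> space M \<Longrightarrow> W 0 \<omega> = 0" using BM unfolding std_brownian_motion_def by blast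
  have Wd: "\<And>s u. 0 \<le> s \<Longrightarrow> s < u \<Longrightarrow> distributed M lborel (\<lambda>\<omega>. W u \<omega> - W s \<omega>) (normal_density 0 (sqrt (u - s)))"
    using BM unfolding std_brownian_motion_def by blast
  have Wi: "\<And>ts. sorted_wrt (<) ts \<Longrightarrow> (\<forall>t\<in>set ts. 0 \<le> t) \<Longrightarrow>
        indep_vars (\<lambda>_. borel) (\<lambda>i \<omega>. W (ts ! Suc i) \<omega> - W (ts ! i) \<omega>) {..<length ts - 1}"
    using BM unfolding std_brownian_motion_def by blast
  define h where "h = t / real N"
  have h: "h > 0" using t N by (simp add: h_def)
  have tN: "t = real N * h" using N by (simp add: h_def)
  define D where "D = (\<lambda>j \<omega>. W (real (Suc j) * h) \<omega> - W (real j * h) \<omega>)"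
  define \<nu> where "\<nu> = density lborel (\<lambda>x. ennreal (normal_density 0 (sqrt h) x))"
  define V where "V = (\<lambda>\<omega>. \<lambda>j\<in>{..<N}. D j \<omega>)"
  define g where "g = (\<lambda>w. sqrt s2 * w + mu * h)"
  let ?P = "PiM {..<N} (\<lambda>_. \<nu>)"
  have Pnu: "prob_space \<nu>" unfolding \<nu>_def by (rule prob_space_normal_density) (simp add: h)
  have sets_nu: "sets \<nu> = sets borel" by (simp add: \<nu>_def)
  have Dm: "D j \<in> borel_measurable M" for j
    unfolding D_def using h by (intro borel_measurable_diff Wm) auto
  have Ddist: "distr M borel (D j) = \<nu>" for j
  proof -
    have "distributed M lborel (D j) (normal_density 0 (sqrt (real (Suc j) * h - real j * h)))"
      unfolding D_def using h by (intro Wd) (auto simp: algebra_simps)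
    moreover have "real (Suc j) * h - real j * h = h" by (simp add: algebra_simps)
    ultimately have "distr M lborel (D j) = \<nu>" unfolding distributed_def \<nu>_def by simp
    moreover have "distr M borel (D j) = distr M lborel (D j)"
      by (rule distr_cong) auto
    ultimately show ?thesis by simp
  qed
  have indD: "indep_vars (\<lambda>_. borel) D {..<N}"
  proof -
    define ts where "ts = map (\<lambda>k. real k * h) [0..<Suc N]"
    have "sorted_wrt (<) ts" unfolding ts_def sorted_wrt_map
      by (rule sorted_wrt_mono_rel[OF _ sorted_wrt_upt]) (use h in auto)
    moreover have "\<forall>t\<in>set ts. 0 \<le> t" unfolding ts_def using h by auto
    ultimately have "indep_vars (\<lambda>_. borel) (\<lambda>i \<omega>. W (ts ! Suc i) \<omega> - W (ts ! i) \<omega>) {..<length ts - 1}"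
      by (rule Wi)
    moreover have "length ts - 1 = N" unfolding ts_def by simp
    moreover have eqs: "(\<lambda>\<omega>. W (ts ! Suc i) \<omega> - W (ts ! i) \<omega>) = D i" if "i \<in> {..<N}" for i
      using that unfolding ts_def D_def by (auto simp: nth_append simp del: upt_Suc)
    moreover have "indep_vars (\<lambda>_. borel) (\<lambda>i \<omega>. W (ts ! Suc i) \<omega> - W (ts ! i) \<omega>) {..<N} = indep_vars (\<lambda>_. borel) D {..<N}"
      by (rule indep_vars_cong) (use eqs in auto)
    ultimately show ?thesis by simp
  qed
  have setsP: "sets (PiM {..<N} (\<lambda>_. borel)) = sets ?P"
    by (rule sets_PiM_cong) (simp_all add: sets_nu)
  have dV: "distr M ?P V = ?P"
  proof -
    have "distr M (PiM {..<N} (\<lambda>_. borel)) V = PiM {..<N} (\<lambda>i. distr M borel (D i))"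
      unfolding V_def using N
      by (subst indep_vars_iff_distr_eq_PiM[symmetric]) (use Dm indD in auto)
    also have "\<dots> = ?P" by (rule PiM_cong) (auto simp: Ddist)
    also have "distr M (PiM {..<N} (\<lambda>_. borel)) V = distr M ?P V"
      by (rule distr_cong[OF refl setsP]) simp
    finally show ?thesis .
  qed
  have Vm: "V \<in> measurable M ?P"
  proof -
    have "V \<in> measurable M (PiM {..<N} (\<lambda>_. borel))"
      unfolding V_def by (intro measurable_restrict Dm)
    then show ?thesis using measurable_cong_sets[OF refl[of "sets M"] setsP] by simp
  qed
  have gm: "g \<in> borel_measurable \<nu>"
  proof -
    have "g \<in> borel_measurable borel" unfolding g_def by measurable
    then show ?thesis using measurable_cong_sets[OF sets_nu refl[of "sets (borel::real measure)"]] by simp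
  qed
  have thp: "\<theta> \<ge> 0" using th mu s2 by (simp add: divide_nonpos_pos)
  have sumD: "(\<Sum>j<k. D j \<omega>) = W (real k * h) \<omega>" if "\<omega> \<in> space M" for k \<omega>
    using sum_lessThan_telescope[of "\<lambda>j. W (real j * h) \<omega>" k] W0[OF that] unfolding D_def by simp
  have id1: "drifted_bm W mu s2 (real k * h) \<omega> = (\<Sum>j<k. g (D j \<omega>))" if "\<omega> \<in> space M" for k \<omega>
    unfolding drifted_bm_def g_def
    by (simp add: sum.distrib sum_distrib_left[symmetric] sumD[OF that])
  have id2: "drifted_bm W mu s2 t \<omega> - drifted_bm W mu s2 (real k * h) \<omega> = (\<Sum>j\<in>{k..<N}. g (D j \<omega>))"
    if "\<omega> \<in> space M" "k \<le> N" for k \<omega>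
  proof -
    have "(\<Sum>j<N. g (D j \<omega>)) = (\<Sum>j<k. g (D j \<omega>)) + (\<Sum>j\<in>{k..<N}. g (D j \<omega>))"
      using sum.atLeastLessThan_concat[of 0 k N "\<lambda>j. g (D j \<omega>)"] that(2) by (simp add: atLeast0LessThan)
    then show ?thesis using id1[OF that(1), of N] id1[OF that(1), of k] tN by simp
  qed
  define A where "A = {x\<in>space ?P. \<exists>k\<in>{..N}. (\<Sum>j\<in>{k..<N}. g (x j)) > a}"
  define B where "B = {x\<in>space ?P. \<exists>k\<in>{..N}. (\<Sum>j<k. g (x j)) > a}"
  have AB: "A \<in> sets ?P" "B \<in> sets ?P" unfolding A_def B_def by (rule sets_AB[OF gm])+
  have Vsp: "V \<omega> \<in> space ?P" if "\<omega> \<in> space M" for \<omega> using measurable_space[OF Vm that] .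
  have VD: "V \<omega> j = D j \<omega>" if "j < N" for \<omega> j using that unfolding V_def by simp
  have preA: "V -` A \<inter> space M = {\<omega>\<in>space M. \<exists>k\<in>{..N}. drifted_bm W mu s2 t \<omega> - drifted_bm W mu s2 (real k * (t / real N)) \<omega> > a}"
  proof -
    have "(\<Sum>j\<in>{k..<N}. g (V \<omega> j)) = drifted_bm W mu s2 t \<omega> - drifted_bm W mu s2 (real k * (t / real N)) \<omega>"
      if "\<omega> \<in> space M" "k \<le> N" for \<omega> k
      unfolding id2[OF that] h_def[symmetric] by (rule sum.cong) (auto simp: VD)
    then show ?thesis unfolding A_def using Vsp by auto
  qed
  have preB: "V -` B \<inter> space M = {\<omega>\<in>space M. \<exists>k\<in>{..N}. drifted_bm W mu s2 (real k * (t / real N)) \<omega> > a}"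
  proof -
    have "(\<Sum>j<k. g (V \<omega> j)) = drifted_bm W mu s2 (real k * (t / real N)) \<omega>"
      if "\<omega> \<in> space M" "k \<le> N" for \<omega> k
      unfolding id1[OF that(1)] h_def[symmetric] using that(2) by (intro sum.cong) (auto simp: VD)
    then show ?thesis unfolding B_def using Vsp by auto
  qed
  have mA: "measure M (V -` A \<inter> space M) = measure ?P A"
    using measure_distr[OF Vm AB(1)] dV by simp
  have mB: "measure M (V -` B \<inter> space M) = measure ?P B"
    using measure_distr[OF Vm AB(2)] dV by simp
  have rev: "measure ?P A = measure ?P B" unfolding A_def B_def by (rule rev_prod[OF Pnu gm])
  have mgf: "(\<integral>\<^sup>+y. ennreal (exp (\<theta> * g y)) \<partial>\<nu>) \<le> 1"
    using mgf_normal[OF h s2 th] unfolding g_def \<nu>_def by simp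
  interpret PP: prob_space ?P by (intro prob_space_PiM Pnu)
  have "emeasure ?P B \<le> ennreal (exp (- \<theta> * a))"
    using doob_prod[OF Pnu gm thp mgf, of 0 N a] unfolding B_def by (simp add: atLeast0LessThan)
  then have bound: "measure ?P B \<le> exp (- \<theta> * a)"
    by (simp add: PP.emeasure_eq_measure)
  show ?thesis using mA mB rev bound unfolding preA preB by simp
qed
lemma grid_union:
  fixes F :: "real \<Rightarrow> real" and t a :: real
  assumes t: "t \<ge> 0" and F: "continuous_on {0..t} F"
  shows "(\<exists>s\<in>{0..t}. F s > a) \<longleftrightarrow> (\<exists>n. \<exists>k\<in>{..(2::nat)^n}. F (real k * (t / real ((2::nat)^n))) > a)"
proof
  assume "\<exists>s\<in>{0..t}. F s > a"
  then obtain s where s: "0 \<le> s" "s \<le> t" "F s > a" by auto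
  show "\<exists>n. \<exists>k\<in>{..(2::nat)^n}. F (real k * (t / real ((2::nat)^n))) > a"
  proof (cases "t = 0")
    case True
    then have "s = 0" using s by simp
    then show ?thesis using s True by (intro exI[of _ 0] bexI[of _ 0]) auto
  next
    case False
    then have tp: "t > 0" using t by simp
    obtain d where d: "d > 0" and dd: "\<And>x'. x' \<in> {0..t} \<Longrightarrow> dist x' s < d \<Longrightarrow> dist (F x') (F s) < F s - a"
      using F s unfolding continuous_on_iff by (metis atLeastAtMost_iff diff_gt_0_iff_gt)
    obtain n where n: "(1/2::real) ^ n < d / t" using real_arch_pow_inv[of "d/t" "1/2::real"] d tp by auto
    define q where "q = s * 2^n / t"
    have q0: "q \<ge> 0" using s tp by (simp add: q_def)
    define k where "k = nat \<lfloor>q\<rfloor>"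
    have rk: "real k = of_int \<lfloor>q\<rfloor>" using q0 by (simp add: k_def)
    have kq: "real k \<le> q" "q < real k + 1" using rk by linarith+
    have q2: "q \<le> 2^n" using s tp by (simp add: q_def field_simps)
    have kle: "k \<le> 2^n"
    proof -
      have "real k \<le> 2^n" using kq q2 by linarith
      then show ?thesis by (metis of_nat_le_iff of_nat_numeral of_nat_power)
    qed
    have pos: "(2::real)^n > 0" by simp
    have e1: "real k * (t / real ((2::nat)^n)) \<le> s"
    proof -
      have "real k * (t / 2^n) \<le> q * (t / 2^n)" using kq tp by (intro mult_right_mono) auto
      also have "\<dots> = s" using tp by (simp add: q_def)
      finally show ?thesis by simp
    qed
    have e2: "s - real k * (t / real ((2::nat)^n)) < d"
    proof -
      have "s = q * (t / 2^n)" using tp by (simp add: q_def)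
      also have "\<dots> < (real k + 1) * (t / 2^n)" using kq tp by (intro mult_strict_right_mono) auto
      also have "\<dots> = real k * (t / 2^n) + t / 2^n" by (simp add: distrib_right add_divide_distrib)
      finally have "s - real k * (t / 2^n) < t / 2^n" by linarith
      also have "t / 2^n = t * (1/2)^n" by (simp add: power_divide)
      also have "\<dots> < t * (d / t)" using n tp by (intro mult_strict_left_mono) auto
      also have "\<dots> = d" using tp by simp
      finally show ?thesis by simp
    qed
    have mem: "real k * (t / real ((2::nat)^n)) \<in> {0..t}" using e1 s tp by auto
    have "dist (F (real k * (t / real ((2::nat)^n)))) (F s) < F s - a"
      using dd[OF mem] e1 e2 by (simp add: dist_real_def)
    then have "F (real k * (t / real ((2::nat)^n))) > a" by (simp add: dist_real_def abs_less_iff)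
    then show ?thesis using kle by blast
  qed
next
  assume "\<exists>n. \<exists>k\<in>{..(2::nat)^n}. F (real k * (t / real ((2::nat)^n))) > a"
  then obtain n k where k: "k \<le> 2^n" "F (real k * (t / real ((2::nat)^n))) > a" by auto
  have "real k * (t / real ((2::nat)^n)) \<in> {0..t}"
  proof -
    have "real k \<le> 2^n" using k(1) by (metis of_nat_le_iff of_nat_numeral of_nat_power)
    then have "real k * (t / 2^n) \<le> 2^n * (t / 2^n)" using t by (intro mult_right_mono) auto
    then show ?thesis using t by simp
  qed
  then show "\<exists>s\<in>{0..t}. F s > a" using k by blast
qed

lemma grid_mono:
  fixes F :: "real \<Rightarrow> real" and t a :: real
  assumes "\<exists>k\<in>{..(2::nat)^n}. F (real k * (t / real ((2::nat)^n))) > a"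
  shows "\<exists>k\<in>{..(2::nat)^Suc n}. F (real k * (t / real ((2::nat)^Suc n))) > a"
proof -
  obtain k where k: "k \<le> 2^n" "F (real k * (t / real ((2::nat)^n))) > a" using assms by auto
  have "real (2*k) * (t / real ((2::nat)^Suc n)) = real k * (t / real ((2::nat)^n))" by simp
  then show ?thesis using k by (intro bexI[of _ "2*k"]) auto
qed

lemma event_lim:
  fixes M :: "'a measure" and \<Phi> :: "'a \<Rightarrow> real \<Rightarrow> real" and t a :: real
  assumes P: "prob_space M" and t: "t \<ge> 0"
    and cont: "\<And>\<omega>. \<omega> \<in> space M \<Longrightarrow> continuous_on {0..t} (\<Phi> \<omega>)"
    and meas: "\<And>s. s \<in> {0..t} \<Longrightarrow> (\<lambda>\<omega>. \<Phi> \<omega> s) \<in> borel_measurable M"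
  shows "{\<omega>\<in>space M. \<exists>s\<in>{0..t}. \<Phi> \<omega> s > a} \<in> sets M"
    and "(\<lambda>n. measure M {\<omega>\<in>space M. \<exists>k\<in>{..(2::nat)^n}. \<Phi> \<omega> (real k * (t / real ((2::nat)^n))) > a})
          \<longlonglongrightarrow> measure M {\<omega>\<in>space M. \<exists>s\<in>{0..t}. \<Phi> \<omega> s > a}"
proof -
  interpret prob_space M by (rule P)
  define E where "E = (\<lambda>n::nat. {\<omega>\<in>space M. \<exists>k\<in>{..(2::nat)^n}. \<Phi> \<omega> (real k * (t / real ((2::nat)^n))) > a})"
  have pt: "real k * (t / real ((2::nat)^n)) \<in> {0..t}" if "k \<le> 2^n" for k n
  proof -
    have "real k \<le> 2^n" using that by (metis of_nat_le_iff of_nat_numeral of_nat_power)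
    then have "real k * (t / 2^n) \<le> 2^n * (t / 2^n)" using t by (intro mult_right_mono) auto
    then show ?thesis using t by simp
  qed
  have Es: "E n \<in> sets M" for n
  proof -
    have "E n = (\<Union>k\<in>{..(2::nat)^n}. {\<omega>\<in>space M. a < \<Phi> \<omega> (real k * (t / real ((2::nat)^n)))})"
      unfolding E_def by auto
    also have "\<dots> \<in> sets M"
    proof (intro sets.finite_UN finite_atMost ballI)
      fix k assume "k \<in> {..(2::nat)^n}"
      then have "real k * (t / real ((2::nat)^n)) \<in> {0..t}" by (intro pt) simp
      from meas[OF this] show "{\<omega>\<in>space M. a < \<Phi> \<omega> (real k * (t / real ((2::nat)^n)))} \<in> sets M"
        by measurable
    qed
    finally show ?thesis .
  qed
  have inc: "incseq E"
  proof (rule incseq_SucI)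
    fix n show "E n \<subseteq> E (Suc n)"
    proof
      fix \<omega> assume w: "\<omega> \<in> E n"
      then show "\<omega> \<in> E (Suc n)"
        using grid_mono[where F="\<Phi> \<omega>" and n=n and t=t and a=a] unfolding E_def mem_Collect_eq by blast
    qed
  qed
  have U: "{\<omega>\<in>space M. \<exists>s\<in>{0..t}. \<Phi> \<omega> s > a} = (\<Union>n. E n)"
  proof (intro set_eqI iffI)
    fix \<omega> assume "\<omega> \<in> {\<omega>\<in>space M. \<exists>s\<in>{0..t}. \<Phi> \<omega> s > a}"
    then have w: "\<omega> \<in> space M" and e: "\<exists>s\<in>{0..t}. \<Phi> \<omega> s > a" by auto
    have "\<exists>n. \<exists>k\<in>{..(2::nat)^n}. \<Phi> \<omega> (real k * (t / real ((2::nat)^n))) > a"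
      using grid_union[OF t cont[OF w]] e by blast
    then obtain n where "\<exists>k\<in>{..(2::nat)^n}. \<Phi> \<omega> (real k * (t / real ((2::nat)^n))) > a" by blast
    then have "\<omega> \<in> E n" unfolding E_def using w by blast
    then show "\<omega> \<in> (\<Union>n. E n)" by blast
  next
    fix \<omega> assume "\<omega> \<in> (\<Union>n. E n)"
    then obtain n where "\<omega> \<in> E n" by blast
    then have w: "\<omega> \<in> space M" and e: "\<exists>k\<in>{..(2::nat)^n}. \<Phi> \<omega> (real k * (t / real ((2::nat)^n))) > a"
      unfolding E_def by blast+
    have "\<exists>s\<in>{0..t}. \<Phi> \<omega> s > a"
      using grid_union[OF t cont[OF w]] e by blast
    then show "\<omega> \<in> {\<omega>\<in>space M. \<exists>s\<in>{0..t}. \<Phi> \<omega> s > a}" using w by blast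
  qed
  show "{\<omega>\<in>space M. \<exists>s\<in>{0..t}. \<Phi> \<omega> s > a} \<in> sets M" unfolding U using Es by auto
  show "(\<lambda>n. measure M (E n)) \<longlonglongrightarrow> measure M {\<omega>\<in>space M. \<exists>s\<in>{0..t}. \<Phi> \<omega> s > a}"
    unfolding U using Es inc by (intro finite_Lim_measure_incseq) auto
qed
lemma fixed_K:
  fixes M :: "'a measure" and W :: "real \<Rightarrow> 'a \<Rightarrow> real" and s2 beta :: real and K :: nat
  assumes BM: "std_brownian_motion M W" and s2: "s2 > 0" and beta: "beta \<ge> 2" and K: "K \<ge> 2"
  shows "0 \<le> p_overflow M W s2 beta K \<and> p_overflow M W s2 beta K \<le> 1/2 * real K powr (- beta)"
proof -
  have PM: "prob_space M" using BM unfolding std_brownian_motion_def by blast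
  interpret prob_space M by (rule PM)
  have Wm: "\<And>s. s \<ge> 0 \<Longrightarrow> W s \<in> borel_measurable M" using BM unfolding std_brownian_motion_def by blast
  have W0: "\<And>\<omega>. \<omega> \<in> space M \<Longrightarrow> W 0 \<omega> = 0" using BM unfolding std_brownian_motion_def by blast
  have Wc: "\<And>\<omega>. \<omega> \<in> space M \<Longrightarrow> continuous_on {0..} (\<lambda>t. W t \<omega>)"
    using BM unfolding std_brownian_motion_def by blast
  define \<delta> where "\<delta> = delta_a beta s2 K"
  have lnK: "ln (real K) > 0" using K by simp
  have Kp: "real K > 0" using K by simp
  have dp: "\<delta> > 0" unfolding \<delta>_def delta_a_def using lnK Kp s2 beta by simp
  define mu where "mu = - \<delta>"
  define a where "a = real K / 2"
  have ap: "a > 0" using Kp by (simp add: a_def)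
  define \<theta> where "\<theta> = -2*mu/s2"
  have mu0: "mu \<le> 0" using dp by (simp add: mu_def)
  define X where "X = (\<lambda>s \<omega>. drifted_bm W mu s2 s \<omega>)"
  have contX: "continuous_on {0..t} (\<lambda>s. X s \<omega>)" if "\<omega> \<in> space M" for \<omega> t
  proof -
    have "continuous_on {0..t} (\<lambda>s. W s \<omega>)"
      by (rule continuous_on_subset[OF Wc[OF that]]) auto
    then show ?thesis unfolding X_def drifted_bm_def by (intro continuous_intros)
  qed
  have measX: "(\<lambda>\<omega>. X s \<omega>) \<in> borel_measurable M" if "s \<ge> 0" for s
    unfolding X_def drifted_bm_def using Wm[OF that] by measurable
  have X0: "X 0 \<omega> = 0" if "\<omega> \<in> space M" for \<omega>
    unfolding X_def drifted_bm_def using W0[OF that] by simp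
  have Xe: "drifted_bm W (- delta_a beta s2 K) s2 = X" unfolding X_def mu_def \<delta>_def by (intro ext) simp
  define E where "E = (\<lambda>t. {\<omega>\<in>space M. \<exists>s\<in>{0..t}. X t \<omega> - X s \<omega> > a})"
  define G where "G = (\<lambda>t. {\<omega>\<in>space M. \<exists>s\<in>{0..t}. X s \<omega> > a})"
  have Gs: "G t \<in> sets M" if "t \<ge> 0" for t
    unfolding G_def by (rule event_lim(1)[OF PM that, where \<Phi>="\<lambda>\<omega> s. X s \<omega>"]) (auto intro: contX measX)
  have EG: "measure M (E t) = measure M (G t) \<and> measure M (G t) \<le> exp (- \<theta> * a)" if t: "t > 0" for t
  proof -
    have c1: "continuous_on {0..t} (\<lambda>s. X t \<omega> - X s \<omega>)" if "\<omega> \<in> space M" for \<omega>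
      by (intro continuous_on_diff continuous_on_const contX that)
    have m1: "(\<lambda>\<omega>. X t \<omega> - X s \<omega>) \<in> borel_measurable M" if "s \<in> {0..t}" for s
      using that t by (intro borel_measurable_diff measX) auto
    have l1: "(\<lambda>n. measure M {\<omega>\<in>space M. \<exists>k\<in>{..(2::nat)^n}. X t \<omega> - X (real k * (t / real ((2::nat)^n))) \<omega> > a})
          \<longlonglongrightarrow> measure M (E t)"
      unfolding E_def
      by (rule event_lim(2)[OF PM, where \<Phi>="\<lambda>\<omega> s. X t \<omega> - X s \<omega>"])
        (use t c1 m1 in auto)
    have l2: "(\<lambda>n. measure M {\<omega>\<in>space M. \<exists>k\<in>{..(2::nat)^n}. X (real k * (t / real ((2::nat)^n))) \<omega> > a})
          \<longlonglongrightarrow> measure M (G t)"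
      unfolding G_def
      by (rule event_lim(2)[OF PM, where \<Phi>="\<lambda>\<omega> s. X s \<omega>"]) (use t in \<open>auto intro: contX measX\<close>)
    have gl: "measure M {\<omega>\<in>space M. \<exists>k\<in>{..(2::nat)^n}. X t \<omega> - X (real k * (t / real ((2::nat)^n))) \<omega> > a}
       = measure M {\<omega>\<in>space M. \<exists>k\<in>{..(2::nat)^n}. X (real k * (t / real ((2::nat)^n))) \<omega> > a}
     \<and> measure M {\<omega>\<in>space M. \<exists>k\<in>{..(2::nat)^n}. X (real k * (t / real ((2::nat)^n))) \<omega> > a} \<le> exp (- \<theta> * a)" for n
      unfolding X_def by (rule grid_lemma[OF BM s2 t _ \<theta>_def mu0]) simp
    have gl1: "measure M {\<omega>\<in>space M. \<exists>k\<in>{..(2::nat)^n}. X t \<omega> - X (real k * (t / real ((2::nat)^n))) \<omega> > a}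
       = measure M {\<omega>\<in>space M. \<exists>k\<in>{..(2::nat)^n}. X (real k * (t / real ((2::nat)^n))) \<omega> > a}" for n
      using gl[of n] by blast
    have l1': "(\<lambda>n. measure M {\<omega>\<in>space M. \<exists>k\<in>{..(2::nat)^n}. X (real k * (t / real ((2::nat)^n))) \<omega> > a})
          \<longlonglongrightarrow> measure M (E t)" using l1 unfolding gl1 .
    have "measure M (E t) = measure M (G t)" by (rule LIMSEQ_unique[OF l1' l2])
    moreover have "measure M (G t) \<le> exp (- \<theta> * a)"
      using l2 gl by (intro LIMSEQ_le_const2[OF l2]) auto
    ultimately show ?thesis by simp
  qed
  have Gmono: "measure M (G t) \<le> measure M (G t')" if "0 < t" "t \<le> t'" for t t'
  proof (rule finite_measure_mono)
    show "G t \<subseteq> G t'" unfolding G_def using that by auto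
    show "G t' \<in> sets M" using that by (intro Gs) simp
  qed
  have evt: "{\<omega>\<in>space M. reflected_bm W (- delta_a beta s2 K) s2 (real K / 2) t \<omega> > real K} = E t"
    if t: "t > 0" for t
  proof -
    have eqv: "reflected_bm W (- delta_a beta s2 K) s2 (real K / 2) t \<omega> > real K \<longleftrightarrow>
          (\<exists>s\<in>{0..t}. X t \<omega> - X s \<omega> > a)" if w: "\<omega> \<in> space M" for \<omega>
    proof -
      let ?S = "(\<lambda>s. X s \<omega>) ` {0..t}"
      have cpt: "compact ?S" by (rule compact_continuous_image[OF contX[OF w] compact_Icc])
      have bdd: "bdd_below ?S" by (rule bounded_imp_bdd_below[OF compact_imp_bounded[OF cpt]])
      have ne: "?S \<noteq> {}" using t by auto
      have "0 \<in> ?S" using t X0[OF w] by (auto intro!: image_eqI[of _ _ 0])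
      then have "Inf ?S \<le> 0" using cInf_lower[OF _ bdd] by blast
      then have mn: "min 0 (Inf ?S) = Inf ?S" by simp
      have r: "reflected_bm W (- delta_a beta s2 K) s2 (real K / 2) t \<omega> = a + X t \<omega> - Inf ?S"
        unfolding reflected_bm_def Xe mn a_def by simp
      have "reflected_bm W (- delta_a beta s2 K) s2 (real K / 2) t \<omega> > real K \<longleftrightarrow> Inf ?S < X t \<omega> - a"
        unfolding r a_def by linarith
      also have "\<dots> \<longleftrightarrow> (\<exists>x\<in>?S. x < X t \<omega> - a)" by (rule cInf_less_iff[OF ne bdd])
      also have "\<dots> \<longleftrightarrow> (\<exists>s\<in>{0..t}. X s \<omega> < X t \<omega> - a)" by blast
      also have "\<dots> \<longleftrightarrow> (\<exists>s\<in>{0..t}. X t \<omega> - X s \<omega> > a)" by (intro bex_cong refl) linarith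
      finally show ?thesis .
    qed
    show ?thesis unfolding E_def
    proof (rule Collect_cong)
      fix \<omega> show "(\<omega> \<in> space M \<and> reflected_bm W (- delta_a beta s2 K) s2 (real K / 2) t \<omega> > real K) \<longleftrightarrow>
          (\<omega> \<in> space M \<and> (\<exists>s\<in>{0..t}. X t \<omega> - X s \<omega> > a))"
        using eqv[of \<omega>] by blast
    qed
  qed
  define f where "f = (\<lambda>t. measure M {\<omega>\<in>space M. reflected_bm W (- delta_a beta s2 K) s2 (real K / 2) t \<omega> > real K})"
  define gG where "gG = (\<lambda>t. measure M (G t))"
  have fg: "f t = gG t" if "t > 0" for t
    unfolding f_def gG_def evt[OF that] using EG[OF that] by simp
  have gb: "gG t \<le> exp (- \<theta> * a)" if "t > 0" for t using EG[OF that] by (simp add: gG_def)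
  define L where "L = (SUP t\<in>{0<..}. gG t)"
  have bdd: "bdd_above (gG ` {0<..})" using gb by (intro bdd_aboveI2) auto
  have ne: "{0<..} \<noteq> ({}::real set)" by auto
  have gL: "gG t \<le> L" if "t > 0" for t unfolding L_def using bdd that by (intro cSUP_upper) auto
  have Lb: "L \<le> exp (- \<theta> * a)" unfolding L_def using ne gb by (intro cSUP_least) auto
  have L0: "L \<ge> 0" using gL[of 1] measure_nonneg[of M "G 1"] unfolding gG_def by linarith
  have lim: "(f \<longlongrightarrow> L) at_top"
  proof (rule order_tendstoI)
    fix y assume y: "y < L"
    then obtain t0 where t0: "t0 > 0" "y < gG t0"
      unfolding L_def using less_cSUP_iff[OF ne bdd] by auto
    have "eventually (\<lambda>t. t \<ge> t0) at_top" by (rule eventually_ge_at_top)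
    then show "eventually (\<lambda>t. y < f t) at_top"
    proof (rule eventually_mono)
      fix t assume "t \<ge> t0"
      then have "gG t0 \<le> gG t" using Gmono t0 by (simp add: gG_def)
      then show "y < f t" using fg[of t] t0 \<open>t \<ge> t0\<close> by simp
    qed
  next
    fix y assume y: "L < y"
    have "eventually (\<lambda>t::real. t > 0) at_top" by (rule eventually_gt_at_top)
    then show "eventually (\<lambda>t. f t < y) at_top"
    proof (rule eventually_mono)
      fix t :: real assume "t > 0"
      then show "f t < y" using fg[of t] gL[of t] y by linarith
    qed
  qed
  have LL: "Lim at_top f = L" by (rule tendsto_Lim[OF _ lim]) simp
  have pe: "p_overflow M W s2 beta K = 1/2 * L"
    unfolding p_overflow_def LL[unfolded f_def] ..
  have ta: "- \<theta> * a = - beta * ln (real K)"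
    unfolding \<theta>_def mu_def \<delta>_def delta_a_def a_def using s2 Kp by (simp add: field_simps)
  have "exp (- \<theta> * a) = real K powr (- beta)" unfolding ta using Kp by (simp add: powr_def)
  then show ?thesis using pe L0 Lb by simp
qed

theorem lemma5:
  fixes M :: "'a measure" and W :: "real \<Rightarrow> 'a \<Rightarrow> real" and s2 beta :: real
  assumes "std_brownian_motion M W" and "s2 > 0" and "beta \<ge> 2"
  shows "(\<lambda>K. p_overflow M W s2 beta K) \<in> O(\<lambda>K. real K powr (- beta))"
proof (rule bigoI[where c="1/2"])
  have "eventually (\<lambda>K::nat. K \<ge> 2) at_top" by (rule eventually_ge_at_top)
  then show "eventually (\<lambda>K. norm (p_overflow M W s2 beta K) \<le> 1/2 * norm (real K powr (- beta))) at_top"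
  proof (rule eventually_mono)
    fix K :: nat assume "K \<ge> 2"
    from fixed_K[OF assms this] show "norm (p_overflow M W s2 beta K) \<le> 1/2 * norm (real K powr (- beta))"
      by simp
  qed
qed

end
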